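(* Let $T\in\mathcal{L}(\mathcal{H})$ have closed range and satisfy $T^\dagger T(T+T^* )=(T+T^* )T^\dagger T$. Then $T$ is a hypo-EP operator.
   Context: $\mathcal{H}$ is a Hilbert space, $\mathcal{L}(\mathcal{H})$ the bounded operators on it. For $T$ with closed range, $T^\dagger$ is its Moore–Penrose inverse (unique solution of $TT^\dagger T=T$, $T^\dagger TT^\dagger=T^\dagger$, $(T^\dagger T)^*=T^\dagger T$, $(TT^\dagger)^*=TT^\dagger$). $T$ is hypo-EP if $T$ has closed range and $T^\dagger T-TT^\dagger\ge 0$, equivalently $R(T)\subset R(T^* )$, where $R(\cdot)$ denotes range. *)

theory Defs
  imports "HOL-Analysis.Analysis"
begin

class complex_vector = real_vector +
  fixes scaleC :: "complex \<Rightarrow> 'a \<Rightarrow> 'a"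
  assumes scaleC_add_right: "scaleC a (x + y) = scaleC a x + scaleC a y"
    and scaleC_add_left: "scaleC (a + b) x = scaleC a x + scaleC b x"
    and scaleC_scaleC: "scaleC a (scaleC b x) = scaleC (a * b) x"
    and scaleC_one: "scaleC 1 x = x"
    and scaleR_scaleC: "scaleR r x = scaleC (complex_of_real r) x"

class complex_inner = complex_vector + real_normed_vector +
  fixes cinner :: "'a \<Rightarrow> 'a \<Rightarrow> complex"
  assumes cinner_commute: "cinner x y = cnj (cinner y x)"
    and cinner_add_left: "cinner (x + y) z = cinner x z + cinner y z"
    and cinner_scaleC_left: "cinner (scaleC r x) y = cnj r * cinner x y"
    and cinner_real: "Im (cinner x x) = 0"
    and cinner_ge_zero: "0 \<le> Re (cinner x x)"
    and cinner_eq_zero_iff: "cinner x x = 0 \<longleftrightarrow> x = 0"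
    and norm_eq_sqrt_cinner: "norm x = sqrt (Re (cinner x x))"

text \<open>A complex Hilbert space: a complete complex inner product space,
  i.e. a type of class \<open>{complex_inner, complete_space}\<close>.\<close>

definition bounded_clinear :: "('a::complex_inner \<Rightarrow> 'b::complex_inner) \<Rightarrow> bool" where
  "bounded_clinear T \<longleftrightarrow>
     (\<forall>x y. T (x + y) = T x + T y) \<and>
     (\<forall>c x. T (scaleC c x) = scaleC c (T x)) \<and>
     (\<exists>K. \<forall>x. norm (T x) \<le> norm x * K)"

definition is_adjoint :: "('a::complex_inner \<Rightarrow> 'a) \<Rightarrow> ('a \<Rightarrow> 'a) \<Rightarrow> bool" where
  "is_adjoint T S \<longleftrightarrow> (\<forall>x y. cinner (T x) y = cinner x (S y))"

text \<open>The adjoint \<open>T\<^sup>*\<close> (exists uniquely for bounded \<open>T\<close> on a Hilbert space).\<close>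
definition adj :: "('a::complex_inner \<Rightarrow> 'a) \<Rightarrow> ('a \<Rightarrow> 'a)" where
  "adj T = (THE S. is_adjoint T S)"

definition is_moore_penrose :: "('a::complex_inner \<Rightarrow> 'a) \<Rightarrow> ('a \<Rightarrow> 'a) \<Rightarrow> bool" where
  "is_moore_penrose T S \<longleftrightarrow> bounded_clinear S \<and>
     T \<circ> S \<circ> T = T \<and> S \<circ> T \<circ> S = S \<and>
     adj (S \<circ> T) = S \<circ> T \<and> adj (T \<circ> S) = T \<circ> S"

text \<open>Moore--Penrose inverse \<open>T\<^sup>\<dagger>\<close> (exists uniquely when \<open>T\<close> is bounded with closed range).\<close>
definition mp_inv :: "('a::complex_inner \<Rightarrow> 'a) \<Rightarrow> ('a \<Rightarrow> 'a)" where
  "mp_inv T = (THE S. is_moore_penrose T S)"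

definition positive_op :: "('a::complex_inner \<Rightarrow> 'a) \<Rightarrow> bool" where
  "positive_op A \<longleftrightarrow> (\<forall>x. Im (cinner (A x) x) = 0 \<and> 0 \<le> Re (cinner (A x) x))"

definition hypo_EP :: "('a::complex_inner \<Rightarrow> 'a) \<Rightarrow> bool" where
  "hypo_EP T \<longleftrightarrow> closed (range T) \<and>
     positive_op (\<lambda>x. mp_inv T (T x) - T (mp_inv T x))"

end

theory Submission
  imports Defs
begin

lemma scaleC_zero_left [simp]: "scaleC 0 x = (0::'a::complex_vector)"
  by (metis scaleR_scaleC scaleR_zero_left of_real_0)
lemma scaleC_zero_right [simp]: "scaleC c (0::'a::complex_vector) = 0"
  by (metis scaleC_scaleC scaleC_zero_left mult_zero_right)
lemma scaleC_minus1 : "scaleC (-1) x = - (x::'a::complex_vector)"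
  by (metis scaleR_scaleC scaleR_minus1_left of_real_1 of_real_minus)
lemma scaleC_minus_left: "scaleC (- c) x = - scaleC c (x::'a::complex_vector)"
proof -
  have "scaleC (- c) x + scaleC c x = 0" by (metis scaleC_add_left scaleC_zero_left add.left_inverse)
  then show ?thesis by (simp add: eq_neg_iff_add_eq_0)
qed
lemma scaleC_minus_right: "scaleC c (- x) = - scaleC c (x::'a::complex_vector)"
  by (metis scaleC_minus1 scaleC_scaleC scaleC_minus_left mult.commute mult_minus1)
lemma scaleC_diff_right: "scaleC c (x - y) = scaleC c x - scaleC c (y::'a::complex_vector)"
  unfolding diff_conv_add_uminus by (simp only: scaleC_add_right scaleC_minus_right)

lemma cinner_add_right: "cinner x (y + z) = cinner x y + cinner (x::'a::complex_inner) z"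
  using cinner_commute[of x "y+z"] cinner_commute[of y x] cinner_commute[of z x] by (simp add: cinner_add_left)
lemma cinner_scaleC_right: "cinner x (scaleC r y) = r * cinner (x::'a::complex_inner) y"
  using cinner_commute[of x "scaleC r y"] cinner_commute[of y x] by (simp add: cinner_scaleC_left)
lemma cinner_zero_left [simp]: "cinner 0 (y::'a::complex_inner) = 0"
proof -
  have "cinner (0+0) y = cinner 0 y + cinner 0 y" by (rule cinner_add_left)
  then show ?thesis by simp
qed
lemma cinner_zero_right [simp]: "cinner (x::'a::complex_inner) 0 = 0"
  using cinner_commute[of x 0] by simp
lemma cinner_minus_left: "cinner (- x) (y::'a::complex_inner) = - cinner x y"
proof -
  have "cinner (x + - x) y = cinner x y + cinner (-x) y" by (rule cinner_add_left)
  then have "0 = cinner x y + cinner (-x) y" by simp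
  then show ?thesis unfolding eq_neg_iff_add_eq_0 by (simp add: add.commute[of "cinner x y"])
qed
lemma cinner_minus_right: "cinner x (- y::'a::complex_inner) = - cinner x y"
proof -
  have "cinner x (- y) = cnj (cinner (-y) x)" by (rule cinner_commute)
  also have "\<dots> = - cnj (cinner y x)" by (simp only: cinner_minus_left complex_cnj_minus)
  also have "\<dots> = - cinner x y" by (simp only: cinner_commute[of y x] complex_cnj_cnj)
  finally show ?thesis .
qed
lemma cinner_diff_left: "cinner (x - y) (z::'a::complex_inner) = cinner x z - cinner y z"
  unfolding diff_conv_add_uminus by (simp only: cinner_add_left cinner_minus_left)
lemma cinner_diff_right: "cinner x (y - z::'a::complex_inner) = cinner x y - cinner x z"
  unfolding diff_conv_add_uminus by (simp only: cinner_add_right cinner_minus_right)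
lemma cinner_scaleR_left: "cinner (scaleR r x) (y::'a::complex_inner) = of_real r * cinner x y"
  by (simp add: scaleR_scaleC cinner_scaleC_left)
lemma cinner_scaleR_right: "cinner x (scaleR r y::'a::complex_inner) = of_real r * cinner x y"
  by (simp add: scaleR_scaleC cinner_scaleC_right)

lemma cinner_self: "cinner x (x::'a::complex_inner) = of_real ((norm x)\<^sup>2)"
proof -
  have "Re (cinner x x) = (norm x)\<^sup>2" using norm_eq_sqrt_cinner[of x] cinner_ge_zero[of x] by simp
  then show ?thesis using cinner_real[of x] by (simp add: complex_eq_iff)
qed

lemma cinner_self_eq0: "cinner x x = 0 \<longleftrightarrow> (x::'a::complex_inner) = 0"
  by (rule cinner_eq_zero_iff)

lemma cinner_ext_left: "(\<And>y. cinner a y = cinner b (y::'a::complex_inner)) \<Longrightarrow> a = b"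
proof -
  assume h: "\<And>y. cinner a y = cinner b (y::'a::complex_inner)"
  have "cinner (a - b) (a - b) = 0" using h[of "a-b"] by (simp add: cinner_diff_left)
  then show ?thesis by (simp add: cinner_eq_zero_iff)
qed
lemma cinner_ext_right: "(\<And>y. cinner y a = cinner y (b::'a::complex_inner)) \<Longrightarrow> a = b"
  by (rule cinner_ext_left) (metis cinner_commute)

lemma cinner_expand:
  "cinner (x - scaleC t y) (x - scaleC t y) =
   cinner x x - t * cinner x y - cnj t * cinner y x + cnj t * t * cinner y (y::'a::complex_inner)"
  by (simp add: cinner_diff_left cinner_diff_right cinner_scaleC_left cinner_scaleC_right algebra_simps)

lemma cinner_min_lemma:
  fixes x y :: "'a::complex_inner"
  assumes "y \<noteq> 0"
  shows "Re (cinner (x - scaleC (cinner y x / cinner y y) y) (x - scaleC (cinner y x / cinner y y) y))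
     = (norm x)\<^sup>2 - (cmod (cinner y x))\<^sup>2 / (norm y)\<^sup>2"
proof -
  define a where "a = cinner y x"
  define n where "n = (norm y)\<^sup>2"
  define m where "m = (norm x)\<^sup>2"
  have n0: "n \<noteq> 0" using assms by (simp add: n_def)
  have yy: "cinner y y = of_real n" by (simp add: n_def cinner_self)
  have xx: "cinner x x = of_real m" by (simp add: m_def cinner_self)
  have xy: "cinner x y = cnj a" by (simp add: a_def cinner_commute[of x y])
  have aa: "cnj a * a = of_real ((cmod a)\<^sup>2)" by (metis complex_norm_square mult.commute)
  have e: "cinner (x - scaleC (a / of_real n) y) (x - scaleC (a / of_real n) y)
     = of_real m - (a/of_real n) * cnj a - cnj (a / of_real n) * a + cnj (a / of_real n) * (a / of_real n) * of_real n"
    using cinner_expand[of x "a / of_real n" y] unfolding xy a_def[symmetric] yy xx .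
  have c1: "(a/of_real n) * cnj a = of_real ((cmod a)\<^sup>2 / n)" using aa by (simp add: mult.commute)
  have c2: "cnj (a / of_real n) * a = of_real ((cmod a)\<^sup>2 / n)" using aa by simp
  have c3: "cnj (a / of_real n) * (a / of_real n) * of_real n = of_real ((cmod a)\<^sup>2 / n)"
    using aa n0 by (simp add: power2_eq_square)
  have "Re (cinner (x - scaleC (a / of_real n) y) (x - scaleC (a / of_real n) y)) = m - (cmod a)\<^sup>2 / n"
    unfolding e c1 c2 c3 by simp
  then show ?thesis unfolding a_def n_def m_def yy[unfolded n_def] .
qed

lemma cauchy_schwarz: "cmod (cinner x y) \<le> norm x * norm (y::'a::complex_inner)"
proof (cases "x = 0")
  case True then show ?thesis by simp
next
  case False
  have "0 \<le> Re (cinner (y - scaleC (cinner x y / cinner x x) x) (y - scaleC (cinner x y / cinner x x) x))"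
    by (rule cinner_ge_zero)
  then have "(cmod (cinner x y))\<^sup>2 / (norm x)\<^sup>2 \<le> (norm y)\<^sup>2" using cinner_min_lemma[OF False, of y] by simp
  moreover have "(norm x)\<^sup>2 > 0" using False by simp
  ultimately have "(cmod (cinner x y))\<^sup>2 \<le> (norm y)\<^sup>2 * (norm x)\<^sup>2" by (simp add: divide_le_eq)
  then have "(cmod (cinner x y))\<^sup>2 \<le> (norm x * norm y)\<^sup>2" by (simp add: power_mult_distrib mult.commute)
  then show ?thesis by (meson power2_le_imp_le mult_nonneg_nonneg norm_ge_zero)
qed


lemma norm_sq_cinner: "(norm x)\<^sup>2 = Re (cinner x (x::'a::complex_inner))"
  by (simp add: cinner_self)

lemma norm_sq_add: "(norm (u + v))\<^sup>2 = (norm u)\<^sup>2 + (norm v)\<^sup>2 + 2 * Re (cinner u (v::'a::complex_inner))"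
proof -
  have "Re (cinner v u) = Re (cinner u v)" using cinner_commute[of v u] by simp
  then show ?thesis unfolding norm_sq_cinner by (simp add: cinner_add_left cinner_add_right)
qed

lemma norm_sq_diff: "(norm (u - v))\<^sup>2 = (norm u)\<^sup>2 + (norm v)\<^sup>2 - 2 * Re (cinner u (v::'a::complex_inner))"
proof -
  have "Re (cinner v u) = Re (cinner u v)" using cinner_commute[of v u] by simp
  then show ?thesis unfolding norm_sq_cinner by (simp add: cinner_diff_left cinner_diff_right)
qed

lemma parallelogram: "(norm (u + v))\<^sup>2 + (norm (u - v))\<^sup>2 = 2 * (norm u)\<^sup>2 + 2 * (norm (v::'a::complex_inner))\<^sup>2"
  using norm_sq_add[of u v] norm_sq_diff[of u v] by simp

definition csubspace :: "'a::complex_vector set \<Rightarrow> bool" where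
  "csubspace M \<longleftrightarrow> 0 \<in> M \<and> (\<forall>x\<in>M. \<forall>y\<in>M. x + y \<in> M) \<and> (\<forall>c. \<forall>x\<in>M. scaleC c x \<in> M)"

lemma csubspace_diff: "csubspace M \<Longrightarrow> x \<in> M \<Longrightarrow> y \<in> M \<Longrightarrow> x - y \<in> M"
  unfolding csubspace_def by (metis diff_conv_add_uminus scaleC_minus1)

lemma csubspace_scaleR: "csubspace M \<Longrightarrow> x \<in> M \<Longrightarrow> scaleR r x \<in> M"
  unfolding csubspace_def by (simp add: scaleR_scaleC)

lemma minimizer_exists:
  fixes x :: "'a::{complex_inner,complete_space}"
  assumes M: "csubspace M" "closed M"
  shows "\<exists>m\<in>M. \<forall>v\<in>M. norm (x - m) \<le> norm (x - v)"
proof -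
  define f where "f v = (norm (x - v))\<^sup>2" for v
  define D where "D = Inf (f ` M)"
  have M0: "0 \<in> M" using M by (simp add: csubspace_def)
  have bdd: "bdd_below (f ` M)" unfolding f_def by (rule bdd_belowI[of _ 0]) auto
  have Dle: "D \<le> f v" if "v \<in> M" for v
    unfolding D_def using bdd that by (simp add: cInf_lower)
  have "\<exists>v\<in>M. f v < D + 1 / (real n + 1)" for n
  proof -
    have fM: "f ` M \<noteq> {}" using M0 by blast
    have lt: "Inf (f ` M) < D + 1 / (real n + 1)" unfolding D_def by simp
    from cInf_lessD[OF fM lt] obtain y where "y \<in> f ` M" "y < D + 1 / (real n + 1)" by blast
    then show ?thesis by blast
  qed
  then have "\<forall>n. \<exists>v. v \<in> M \<and> f v < D + 1 / (real n + 1)" by blast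
  from choice[OF this] obtain s where "\<forall>n. s n \<in> M \<and> f (s n) < D + 1 / (real n + 1)" by blast
  then have s: "\<And>n. s n \<in> M" "\<And>n. f (s n) < D + 1 / (real n + 1)" by auto
  have mid: "scaleR (1/2) (a + b) \<in> M" if "a \<in> M" "b \<in> M" for a b
    using M that by (simp add: csubspace_def csubspace_scaleR)
  have pb: "(norm (a - b))\<^sup>2 \<le> 2 * f a + 2 * f b - 4 * D" if "a \<in> M" "b \<in> M" for a b
  proof -
    have h1: "(norm ((x - a) + (x - b)))\<^sup>2 + (norm ((x - a) - (x - b)))\<^sup>2 = 2 * f a + 2 * f b"
      unfolding f_def by (rule parallelogram)
    have h2: "(x - a) + (x - b) = scaleR 2 (x - scaleR (1/2) (a + b))"
      by (simp add: algebra_simps scaleR_2)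
    have h3: "(x - a) - (x - b) = b - a" by simp
    have h4: "norm (b - a) = norm (a - b)" by (rule norm_minus_commute)
    have h5: "(norm (scaleR 2 (x - scaleR (1/2) (a + b))))\<^sup>2 = 4 * f (scaleR (1/2) (a + b))"
      unfolding f_def by (simp add: power2_eq_square)
    have h6: "D \<le> f (scaleR (1/2) (a + b))" using Dle mid that by blast
    have "4 * f (scaleR (1/2) (a + b)) + (norm (a - b))\<^sup>2 = 2 * f a + 2 * f b"
      using h1 unfolding h2 h3 h4 h5 .
    then show ?thesis using h6 by linarith
  qed
  have cs: "Cauchy s"
  proof (rule CauchyI)
    fix e :: real assume e: "0 < e"
    obtain N :: nat where N: "4 / e\<^sup>2 < real N" using reals_Archimedean2 by blast
    have N': "4 / (real N + 1) < e\<^sup>2"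
    proof -
      have e2: "0 < e\<^sup>2" using e by simp
      have "4 < real N * e\<^sup>2" using N e2 by (simp add: divide_less_eq)
      moreover have "(real N + 1) * e\<^sup>2 = real N * e\<^sup>2 + e\<^sup>2" by (simp add: algebra_simps)
      ultimately have "4 < (real N + 1) * e\<^sup>2" using e2 by linarith
      moreover have "0 < real N + 1" by simp
      ultimately show ?thesis by (simp add: divide_less_eq mult.commute)
    qed
    show "\<exists>M. \<forall>m\<ge>M. \<forall>n\<ge>M. norm (s m - s n) < e"
    proof (intro exI allI impI)
      fix m n assume mn: "N \<le> m" "N \<le> n"
      have "(norm (s m - s n))\<^sup>2 \<le> 2 * f (s m) + 2 * f (s n) - 4 * D" using pb[OF s(1)[of m] s(1)[of n]] .
      also have "\<dots> \<le> 2 / (real m + 1) + 2 / (real n + 1)" using s(2)[of m] s(2)[of n] by linarith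
      also have "\<dots> \<le> 2 / (real N + 1) + 2 / (real N + 1)"
      proof (rule add_mono)
        show "2 / (real m + 1) \<le> 2 / (real N + 1)" using mn(1) frac_le[of 2 2 "real N + 1" "real m + 1"] by simp
        show "2 / (real n + 1) \<le> 2 / (real N + 1)" using mn(2) frac_le[of 2 2 "real N + 1" "real n + 1"] by simp
      qed
      also have "\<dots> < e\<^sup>2" using N' by simp
      finally have "(norm (s m - s n))\<^sup>2 < e\<^sup>2" .
      then show "norm (s m - s n) < e" by (rule power2_less_imp_less) (use e in auto)
    qed
  qed
  then have "convergent s" by (simp add: Cauchy_convergent_iff)
  then obtain m where lim: "s \<longlonglongrightarrow> m" unfolding convergent_def by blast
  have mM: "m \<in> M" using closed_sequentially[OF M(2)] s(1) lim by blast
  have fl: "(\<lambda>n. f (s n)) \<longlonglongrightarrow> f m" unfolding f_def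
    by (intro tendsto_intros lim)
  have "f m \<le> f v" if v: "v \<in> M" for v
  proof -
    have z: "(\<lambda>n. 1 / (real n + 1)) \<longlonglongrightarrow> 0"
      using LIMSEQ_inverse_real_of_nat by (simp add: inverse_eq_divide add.commute)
    have "(\<lambda>n. f v + 1 / (real n + 1)) \<longlonglongrightarrow> f v + 0"
      by (intro tendsto_intros z)
    then have l2: "(\<lambda>n. f v + 1 / (real n + 1)) \<longlonglongrightarrow> f v" by simp
    show ?thesis
    proof (rule LIMSEQ_le[OF fl l2])
      show "\<exists>N. \<forall>n\<ge>N. f (s n) \<le> f v + 1 / (real n + 1)"
      proof (intro exI allI impI)
        fix n :: nat show "f (s n) \<le> f v + 1 / (real n + 1)" using s(2)[of n] Dle[OF v] by linarith
      qed
    qed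
  qed
  then have "\<forall>v\<in>M. norm (x - m) \<le> norm (x - v)" unfolding f_def
    using power2_le_imp_le norm_ge_zero by blast
  then show ?thesis using mM by blast
qed

lemma orth_of_min:
  fixes x :: "'a::complex_inner"
  assumes M: "csubspace M" and m: "m \<in> M" and min: "\<forall>v\<in>M. norm (x - m) \<le> norm (x - v)"
    and v: "v \<in> M"
  shows "cinner v (x - m) = 0"
proof (cases "v = 0")
  case True then show ?thesis by simp
next
  case False
  define t where "t = cinner v (x - m) / cinner v v"
  have "m + scaleC t v \<in> M" using M m v by (simp add: csubspace_def)
  then have "norm (x - m) \<le> norm (x - (m + scaleC t v))" using min by blast
  moreover have "x - (m + scaleC t v) = (x - m) - scaleC t v" by simp
  ultimately have "(norm (x - m))\<^sup>2 \<le> (norm ((x - m) - scaleC t v))\<^sup>2"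
    by (simp add: power_mono)
  also have "\<dots> = (norm (x - m))\<^sup>2 - (cmod (cinner v (x - m)))\<^sup>2 / (norm v)\<^sup>2"
    unfolding t_def norm_sq_cinner[of "(x - m) - scaleC (cinner v (x - m) / cinner v v) v"] by (rule cinner_min_lemma[OF False])
  finally have "(cmod (cinner v (x - m)))\<^sup>2 / (norm v)\<^sup>2 \<le> 0" by simp
  moreover have "(norm v)\<^sup>2 > 0" using False by simp
  ultimately have "(cmod (cinner v (x - m)))\<^sup>2 \<le> 0" by (simp add: divide_le_0_iff)
  then show ?thesis by simp
qed

lemma proj_exists:
  fixes x :: "'a::{complex_inner,complete_space}"
  assumes M: "csubspace M" "closed M"
  shows "\<exists>m\<in>M. \<forall>v\<in>M. cinner v (x - m) = 0"
  using minimizer_exists[OF M, of x] orth_of_min[OF M(1)] by blast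


definition proj :: "'a::complex_inner set \<Rightarrow> 'a \<Rightarrow> 'a" where
  "proj M x = (SOME m. m \<in> M \<and> (\<forall>v\<in>M. cinner v (x - m) = 0))"

lemma proj:
  fixes x :: "'a::{complex_inner,complete_space}"
  assumes "csubspace M" "closed M"
  shows "proj M x \<in> M" "\<And>v. v \<in> M \<Longrightarrow> cinner v (x - proj M x) = 0"
proof -
  have "\<exists>m. m \<in> M \<and> (\<forall>v\<in>M. cinner v (x - m) = 0)" using proj_exists[OF assms] by blast
  then have "proj M x \<in> M \<and> (\<forall>v\<in>M. cinner v (x - proj M x) = 0)"
    unfolding proj_def by (rule someI_ex)
  then show "proj M x \<in> M" "\<And>v. v \<in> M \<Longrightarrow> cinner v (x - proj M x) = 0" by auto
qed

lemma orth_unique: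
  fixes x :: "'a::complex_inner"
  assumes M: "csubspace M" and m: "m \<in> M" "\<forall>v\<in>M. cinner v (x - m) = 0"
    and m': "m' \<in> M" "\<forall>v\<in>M. cinner v (x - m') = 0"
  shows "m = m'"
proof -
  have d: "m - m' \<in> M" using csubspace_diff[OF M m(1) m'(1)] .
  have "cinner (m - m') (m - m') = cinner (m - m') ((x - m') - (x - m))" by simp
  also have "\<dots> = 0" using m(2) m'(2) d by (simp add: cinner_diff_right)
  finally show ?thesis by (simp add: cinner_eq_zero_iff)
qed

lemma proj_unique:
  fixes x :: "'a::{complex_inner,complete_space}"
  assumes "csubspace M" "closed M" "m \<in> M" "\<forall>v\<in>M. cinner v (x - m) = 0"
  shows "proj M x = m"
  using orth_unique[OF assms(1) _ _ assms(3,4)] proj[OF assms(1,2)] by blast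

lemma riesz:
  fixes \<phi> :: "'a::{complex_inner,complete_space} \<Rightarrow> complex"
  assumes add: "\<And>x y. \<phi> (x + y) = \<phi> x + \<phi> y"
    and sc: "\<And>c x. \<phi> (scaleC c x) = c * \<phi> x"
    and bnd: "\<And>x. cmod (\<phi> x) \<le> K * norm x"
  shows "\<exists>w. \<forall>x. \<phi> x = cinner w x"
proof (cases "\<forall>x. \<phi> x = 0")
  case True
  then show ?thesis by (intro exI[of _ 0]) simp
next
  case False
  then obtain x0 where x0: "\<phi> x0 \<noteq> 0" by blast
  have minus: "\<phi> (- x) = - \<phi> x" for x using sc[of "-1" x] by (simp add: scaleC_minus1)
  have diff: "\<phi> (x - y) = \<phi> x - \<phi> y" for x y
    using add[of x "-y"] minus[of y] by simp
  have zero: "\<phi> 0 = 0" using sc[of 0 0] by simp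
  define K0 where "K0 = {x. \<phi> x = 0}"
  have sub: "csubspace K0" unfolding K0_def csubspace_def using zero add sc by simp
  have bl: "bounded_linear \<phi>"
  proof (rule bounded_linear_intro[where K = K])
    show "\<phi> (x + y) = \<phi> x + \<phi> y" for x y by (rule add)
    show "\<phi> (scaleR r x) = scaleR r (\<phi> x)" for r x
      using sc[of "of_real r" x] by (simp add: scaleR_scaleC scaleR_conv_of_real)
    show "norm (\<phi> x) \<le> norm x * K" for x using bnd[of x] by (simp add: mult.commute)
  qed
  have cl: "closed K0" unfolding K0_def
    by (rule closed_Collect_eq) (auto intro: linear_continuous_on bl)
  define m where "m = proj K0 x0"
  define z where "z = x0 - m"
  have mK: "\<phi> m = 0" using proj(1)[OF sub cl, of x0] unfolding m_def K0_def by simp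
  have zorth: "cinner v z = 0" if "\<phi> v = 0" for v
    using proj(2)[OF sub cl, of v x0] that unfolding z_def m_def K0_def by simp
  have phz: "\<phi> z = \<phi> x0" unfolding z_def using diff mK by simp
  have z0: "z \<noteq> 0" using phz x0 zero by auto
  have zz: "cinner z z \<noteq> 0" using z0 by (simp add: cinner_eq_zero_iff)
  have "\<phi> x = cinner (scaleC (cnj (\<phi> z / cinner z z)) z) x" for x
  proof -
    define u where "u = x - scaleC (\<phi> x / \<phi> z) z"
    have "\<phi> u = 0" unfolding u_def using phz x0 by (simp add: diff sc)
    then have "cinner u z = 0" by (rule zorth)
    then have "cinner z u = 0" using cinner_commute[of z u] by simp
    then have "cinner z x = (\<phi> x / \<phi> z) * cinner z z"
      unfolding u_def by (simp add: cinner_diff_right cinner_scaleC_right)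
    then show ?thesis using zz phz x0 by (simp add: cinner_scaleC_left field_simps)
  qed
  then show ?thesis by blast
qed

lemma bclin_add: "bounded_clinear T \<Longrightarrow> T (x + y) = T x + T y"
  unfolding bounded_clinear_def by blast
lemma bclin_scaleC: "bounded_clinear T \<Longrightarrow> T (scaleC c x) = scaleC c (T x)"
  unfolding bounded_clinear_def by blast
lemma bclin_bound: "bounded_clinear T \<Longrightarrow> \<exists>K. \<forall>x. norm (T x) \<le> norm x * K"
  unfolding bounded_clinear_def by blast
lemma bclin_zero: "bounded_clinear T \<Longrightarrow> T 0 = 0"
  using bclin_scaleC[of T 0 0] by simp
lemma bclin_minus: "bounded_clinear T \<Longrightarrow> T (- x) = - T x"
  using bclin_scaleC[of T "-1" x] by (simp add: scaleC_minus1)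
lemma bclin_diff: "bounded_clinear T \<Longrightarrow> T (x - y) = T x - T y"
  using bclin_add[of T x "-y"] bclin_minus[of T y] by simp
lemma bclin_scaleR: "bounded_clinear T \<Longrightarrow> T (scaleR r x) = scaleR r (T x)"
  using bclin_scaleC[of T "of_real r" x] by (simp add: scaleR_scaleC)
lemma bclin_bounded_linear: "bounded_clinear T \<Longrightarrow> bounded_linear T"
proof -
  assume T: "bounded_clinear T"
  then obtain K where K: "\<forall>x. norm (T x) \<le> norm x * K" using bclin_bound by blast
  show ?thesis
    by (rule bounded_linear_intro[where K = K]) (use T K bclin_add bclin_scaleR in auto)
qed
lemma bclin_comp: "bounded_clinear S \<Longrightarrow> bounded_clinear T \<Longrightarrow> bounded_clinear (S \<circ> T)"
proof -
  assume S: "bounded_clinear S" and T: "bounded_clinear T"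
  obtain K1 where K1: "\<forall>x. norm (S x) \<le> norm x * K1" using bclin_bound[OF S] by blast
  obtain K2 where K2: "\<forall>x. norm (T x) \<le> norm x * K2" using bclin_bound[OF T] by blast
  have K1p: "0 \<le> K1 \<or> (\<forall>x. S x = 0)"
  proof (cases "0 \<le> K1")
    case False
    have "S x = 0" for x using K1[rule_format, of x] False
      by (smt (verit) mult_nonneg_nonpos norm_ge_zero norm_le_zero_iff)
    then show ?thesis by blast
  qed simp
  have "norm (S (T x)) \<le> norm x * (K2 * max K1 0)" for x
  proof (cases "0 \<le> K1")
    case True
    have "norm (S (T x)) \<le> norm (T x) * K1" using K1 by blast
    also have "\<dots> \<le> (norm x * K2) * K1" using K2 True by (simp add: mult_right_mono)
    finally show ?thesis using True by (simp add: mult.assoc)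
  next
    case False
    then have "S (T x) = 0" using K1p by blast
    then show ?thesis using False by simp
  qed
  then show ?thesis unfolding bounded_clinear_def using S T bclin_add bclin_scaleC by (auto simp: bclin_add bclin_scaleC)
qed

lemma adjoint_exists:
  fixes A :: "'a::{complex_inner,complete_space} \<Rightarrow> 'a"
  assumes A: "bounded_clinear A"
  shows "\<exists>B. is_adjoint A B"
proof -
  obtain K where K: "\<forall>x. norm (A x) \<le> norm x * K" using bclin_bound[OF A] by blast
  have "\<exists>w. \<forall>x. cinner y (A x) = cinner w x" for y
  proof (rule riesz[where K = "norm y * K"])
    show "cinner y (A (x + z)) = cinner y (A x) + cinner y (A z)" for x z
      by (simp add: bclin_add[OF A] cinner_add_right)
    show "cinner y (A (scaleC c x)) = c * cinner y (A x)" for c x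
      by (simp add: bclin_scaleC[OF A] cinner_scaleC_right)
    show "cmod (cinner y (A x)) \<le> norm y * K * norm x" for x
    proof -
      have "cmod (cinner y (A x)) \<le> norm y * norm (A x)" by (rule cauchy_schwarz)
      also have "\<dots> \<le> norm y * (norm x * K)" using K by (simp add: mult_left_mono)
      finally show ?thesis by (simp add: mult_ac)
    qed
  qed
  then obtain B where B: "\<forall>y x. cinner y (A x) = cinner (B y) x" by metis
  have "cinner (A x) y = cinner x (B y)" for x y
    using B cinner_commute[of "A x" y] cinner_commute[of x "B y"] by simp
  then show ?thesis unfolding is_adjoint_def by blast
qed

lemma adjoint_unique: "is_adjoint A B \<Longrightarrow> is_adjoint A B' \<Longrightarrow> B = B'"
  unfolding is_adjoint_def by (rule ext, rule cinner_ext_right) metis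

lemma adj_eq: "is_adjoint A B \<Longrightarrow> adj A = B"
  unfolding adj_def using adjoint_unique by blast

lemma adj_is_adjoint:
  fixes A :: "'a::{complex_inner,complete_space} \<Rightarrow> 'a"
  shows "bounded_clinear A \<Longrightarrow> is_adjoint A (adj A)"
  using adjoint_exists adj_eq by metis

lemma adjoint_diff: "is_adjoint A B \<Longrightarrow> B (x - y) = B x - B y"
  unfolding is_adjoint_def
  by (rule cinner_ext_right) (metis cinner_diff_right)


lemma geo_half: "m \<le> n \<Longrightarrow> (\<Sum>k=m..<n. (1/2::real)^k) = 2*(1/2)^m - 2*(1/2)^n"
proof (induction n rule: dec_induct)
  case base then show ?case by simp
next
  case (step n)
  then show ?case by (simp add: sum.atLeastLessThan_Suc)
qed

lemma approx_to_exact: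
  fixes T :: "'a::{complex_inner,complete_space} \<Rightarrow> 'a"
  assumes T: "bounded_clinear T" and C0: "0 \<le> C0"
    and approx: "\<And>y e. y \<in> range T \<Longrightarrow> 0 < e \<Longrightarrow> \<exists>x. norm x \<le> C0 * norm y \<and> norm (y - T x) < e"
    and y: "y \<in> range T"
  shows "\<exists>x. T x = y \<and> norm x \<le> 2 * C0 * norm y"
proof (cases "y = 0")
  case True
  then show ?thesis using bclin_zero[OF T] by (intro exI[of _ 0]) simp
next
  case False
  define b where "b = norm y"
  have b: "0 < b" using False by (simp add: b_def)
  have h: "\<forall>w e. \<exists>x. w \<in> range T \<and> 0 < e \<longrightarrow> norm x \<le> C0 * norm w \<and> norm (w - T x) < e"
    using approx by blast
  have "\<forall>w. \<exists>g. \<forall>e. w \<in> range T \<and> 0 < e \<longrightarrow> norm (g e) \<le> C0 * norm w \<and> norm (w - T (g e)) < e"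
  proof
    fix w show "\<exists>g. \<forall>e. w \<in> range T \<and> 0 < e \<longrightarrow> norm (g e) \<le> C0 * norm w \<and> norm (w - T (g e)) < e"
      using h by (intro choice) blast
  qed
  from choice[OF this] obtain f where f0: "\<forall>w e. w \<in> range T \<and> 0 < e \<longrightarrow> norm (f w e) \<le> C0 * norm w \<and> norm (w - T (f w e)) < e"
    by blast
  have f: "\<And>w e. w \<in> range T \<Longrightarrow> 0 < e \<Longrightarrow> norm (f w e) \<le> C0 * norm w \<and> norm (w - T (f w e)) < e"
    using f0 by blast
  define z where "z = rec_nat y (\<lambda>k zk. zk - T (f zk (b * (1/2)^(Suc k))))"
  have z0: "z 0 = y" by (simp add: z_def)
  have zS: "z (Suc k) = z k - T (f (z k) (b * (1/2)^(Suc k)))" for k by (simp add: z_def)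
  define x where "x k = f (z k) (b * (1/2)^(Suc k))" for k
  have zx: "z (Suc k) = z k - T (x k)" for k by (simp add: zS x_def)
  have inv: "z k \<in> range T \<and> norm (z k) \<le> b * (1/2)^k" for k
  proof (induction k)
    case 0 then show ?case using y by (simp add: z0 b_def)
  next
    case (Suc k)
    have "z (Suc k) = T (inv T (z k) - x k)"
    proof -
      have "T (inv T (z k)) = z k" using Suc.IH by (simp add: f_inv_into_f)
      then show ?thesis by (simp add: zx bclin_diff[OF T])
    qed
    moreover have "norm (z (Suc k)) \<le> b * (1/2)^(Suc k)"
      using f[of "z k" "b * (1/2)^(Suc k)"] Suc.IH b unfolding zx x_def by simp
    ultimately show ?case by blast
  qed
  have xb: "norm (x k) \<le> C0 * b * (1/2)^k" for k
  proof -
    have "norm (x k) \<le> C0 * norm (z k)" using f[of "z k" "b * (1/2)^(Suc k)"] inv[of k] b unfolding x_def by simp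
    also have "\<dots> \<le> C0 * (b * (1/2)^k)" using inv[of k] C0 by (simp add: mult_left_mono)
    finally show ?thesis by (simp add: mult.assoc)
  qed
  define S where "S n = (\<Sum>k=0..<n. x k)" for n
  have TS: "T (S n) = y - z n" for n
  proof (induction n)
    case 0 then show ?case by (simp add: S_def z0 bclin_zero[OF T])
  next
    case (Suc n)
    have "T (S (Suc n)) = T (S n) + T (x n)" by (simp add: S_def bclin_add[OF T])
    then show ?case using Suc.IH by (simp add: zx)
  qed
  have Sdiff: "norm (S n - S m) \<le> 2 * C0 * b * (1/2)^m" if "m \<le> n" for m n
  proof -
    have "S n - S m = (\<Sum>k=m..<n. x k)" unfolding S_def using sum_diff_nat_ivl[of 0 m n x] that by simp
    then have "norm (S n - S m) \<le> (\<Sum>k=m..<n. norm (x k))" by (simp add: norm_sum)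
    also have "\<dots> \<le> (\<Sum>k=m..<n. C0 * b * (1/2)^k)" by (rule sum_mono) (rule xb)
    also have "\<dots> = C0 * b * (\<Sum>k=m..<n. (1/2)^k)" by (simp add: sum_distrib_left)
    also have "\<dots> = C0 * b * (2*(1/2)^m - 2*(1/2)^n)" using geo_half[OF that] by simp
    also have "\<dots> \<le> C0 * b * (2*(1/2)^m)" using C0 b by (intro mult_left_mono) auto
    finally show ?thesis by (simp add: mult_ac)
  qed
  have Sb: "norm (S n) \<le> 2 * C0 * b" for n
    using Sdiff[of 0 n] by (simp add: S_def)
  have cauchy: "Cauchy S"
  proof (rule CauchyI)
    fix e :: real assume e: "0 < e"
    have "(\<lambda>n. (1/2::real)^n) \<longlonglongrightarrow> 0" by (rule LIMSEQ_power_zero) simp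
    then have "eventually (\<lambda>n. (1/2::real)^n < e / (2 * C0 * b + 1)) sequentially"
    proof (rule order_tendstoD(2))
      show "0 < e / (2 * C0 * b + 1)" using e b C0 by (simp add: add_nonneg_pos)
    qed
    then obtain M where M: "\<And>n. n \<ge> M \<Longrightarrow> (1/2::real)^n < e / (2 * C0 * b + 1)"
      unfolding eventually_sequentially by blast
    have key: "2 * C0 * b * (1/2)^k < e" if "k \<ge> M" for k
    proof -
      have p: "0 < 2 * C0 * b + 1" using C0 b by (simp add: add_nonneg_pos)
      have "2 * C0 * b * (1/2)^k \<le> (2 * C0 * b + 1) * (1/2)^k" by (simp add: mult_right_mono)
      also have "\<dots> < (2 * C0 * b + 1) * (e / (2 * C0 * b + 1))" using M[OF that] p by (intro mult_strict_left_mono) auto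
      also have "\<dots> = e" using p by simp
      finally show ?thesis .
    qed
    show "\<exists>M. \<forall>m\<ge>M. \<forall>n\<ge>M. norm (S m - S n) < e"
    proof (intro exI[of _ M] allI impI)
      fix m n assume mn: "M \<le> m" "M \<le> n"
      show "norm (S m - S n) < e"
      proof (cases "m \<le> n")
        case True
        then have "norm (S n - S m) < e" using Sdiff[OF True] key[OF mn(1)] by linarith
        then show ?thesis by (simp add: norm_minus_commute)
      next
        case False
        then show ?thesis using Sdiff[of n m] key[OF mn(2)] by linarith
      qed
    qed
  qed
  then have "convergent S" by (simp add: Cauchy_convergent_iff)
  then obtain xs where lim: "S \<longlonglongrightarrow> xs" unfolding convergent_def by blast
  have "(\<lambda>n. T (S n)) \<longlonglongrightarrow> T xs"
    using bounded_linear.tendsto[OF bclin_bounded_linear[OF T] lim] .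
  moreover have "(\<lambda>n. T (S n)) \<longlonglongrightarrow> y"
  proof -
    have "(\<lambda>n. (1/2::real)^n) \<longlonglongrightarrow> 0" by (rule LIMSEQ_power_zero) simp
    then have zl: "(\<lambda>n. b * (1/2::real)^n) \<longlonglongrightarrow> b * 0" by (rule tendsto_mult_left)
    have "(\<lambda>n. z n) \<longlonglongrightarrow> 0"
    proof (rule tendsto_norm_zero_cancel)
      show "(\<lambda>n. norm (z n)) \<longlonglongrightarrow> 0"
        by (rule tendsto_sandwich[of "\<lambda>n. 0" _ _ "\<lambda>n. b * (1/2)^n"]) (use zl inv in auto)
    qed
    then have "(\<lambda>n. y - z n) \<longlonglongrightarrow> y - 0" by (rule tendsto_diff[OF tendsto_const])
    then show ?thesis unfolding TS by simp
  qed
  ultimately have Txs: "T xs = y" using LIMSEQ_unique by blast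
  have "norm xs \<le> 2 * C0 * b"
    by (rule LIMSEQ_le_const2[OF tendsto_norm[OF lim]]) (use Sb in blast)
  then show ?thesis using Txs unfolding b_def by blast
qed


lemma baire_step:
  fixes T :: "'a::{complex_inner,complete_space} \<Rightarrow> 'a"
  assumes T: "bounded_clinear T" and cl: "closed (range T)"
  shows "\<exists>n::nat. \<exists>y0 r. 0 < r \<and> y0 \<in> range T \<and>
           (\<forall>y\<in>range T. dist y y0 < r \<longrightarrow> y \<in> closure (T ` cball 0 (real n)))"
proof -
  define R where "R = range T"
  define X where "X = top_of_set R"
  define G where "G n = R \<inter> closure (T ` cball 0 (real n))" for n :: nat
  have cms: "completely_metrizable_space X"
    unfolding X_def
    by (rule completely_metrizable_space_closedin[OF completely_metrizable_space_euclidean])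
       (use cl[unfolded closed_closedin] in \<open>unfold R_def\<close>)
  have UG: "\<Union>(range G) = R"
  proof
    show "\<Union>(range G) \<subseteq> R"
    proof
      fix y assume "y \<in> \<Union>(range G)"
      then obtain n where "y \<in> G n" by blast
      then show "y \<in> R" unfolding G_def by (rule IntD1)
    qed
    show "R \<subseteq> \<Union>(range G)"
    proof
      fix y assume "y \<in> R"
      then obtain x where x: "y = T x" unfolding R_def by blast
      obtain n :: nat where n: "norm x \<le> real n" using real_arch_simple by blast
      have "x \<in> cball 0 (real n)" using n by simp
      then have "T x \<in> T ` cball 0 (real n)" by (rule imageI)
      then have "y \<in> closure (T ` cball 0 (real n))" unfolding x by (rule subsetD[OF closure_subset])
      then have "y \<in> G n" using \<open>y \<in> R\<close> unfolding G_def by (rule IntI[rotated])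
      then show "y \<in> \<Union>(range G)" by (rule UN_I[rotated]) simp
    qed
  qed
  have Rne: "R \<noteq> {}" unfolding R_def by blast
  have tX: "topspace X = R" unfolding X_def by simp
  have "X interior_of \<Union>(range G) \<noteq> {}"
    unfolding UG using Rne interior_of_topspace[of X] unfolding tX by simp
  moreover have cG: "closedin X (G n)" for n
    unfolding X_def G_def by (rule closedin_closed_Int) simp
  moreover have cnt: "countable (range G)" by simp
  ultimately obtain n where "X interior_of (G n) \<noteq> {}"
  proof -
    assume ex: "\<And>n. X interior_of G n \<noteq> {} \<Longrightarrow> thesis"
    show thesis
    proof (rule ccontr)
      assume "\<not> thesis"
      then have "\<And>S. S \<in> range G \<Longrightarrow> closedin X S \<and> X interior_of S = {}" using ex cG by blast
      then have "X interior_of \<Union>(range G) = {}"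
        by (rule Baire_category_alt[OF disjI1[OF cms] cnt])
      then show False using \<open>X interior_of \<Union>(range G) \<noteq> {}\<close> by simp
    qed
  qed
  then obtain y0 U where U: "openin X U" "y0 \<in> U" "U \<subseteq> G n"
    unfolding interior_of_def by blast
  then obtain V where V: "open V" "U = R \<inter> V" unfolding X_def openin_open by blast
  then obtain r where r: "0 < r" "ball y0 r \<subseteq> V" using U(2) open_contains_ball by blast
  have y0R: "y0 \<in> R" using U V by blast
  have "\<forall>y\<in>range T. dist y y0 < r \<longrightarrow> y \<in> closure (T ` cball 0 (real n))"
  proof (intro ballI impI)
    fix y assume y: "y \<in> range T" "dist y y0 < r"
    then have "y \<in> ball y0 r" by (simp add: dist_commute)
    then have "y \<in> U" using r V y unfolding R_def by blast
    then show "y \<in> closure (T ` cball 0 (real n))" using U unfolding G_def by blast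
  qed
  then show ?thesis using r y0R unfolding R_def by blast
qed


lemma range_scaleR: "bounded_clinear T \<Longrightarrow> y \<in> range T \<Longrightarrow> scaleR s y \<in> range T"
  by (metis bclin_scaleR rangeE rangeI)
lemma range_add: "bounded_clinear T \<Longrightarrow> y \<in> range T \<Longrightarrow> z \<in> range T \<Longrightarrow> y + z \<in> range T"
  by (metis bclin_add rangeE rangeI)

lemma open_mapping_bound:
  fixes T :: "'a::{complex_inner,complete_space} \<Rightarrow> 'a"
  assumes T: "bounded_clinear T" and cl: "closed (range T)"
  shows "\<exists>C. \<forall>y\<in>range T. \<exists>x. T x = y \<and> norm x \<le> C * norm y"
proof -
  obtain n :: nat and y0 r where r: "0 < r" and y0: "y0 \<in> range T"
    and B: "\<And>y. y \<in> range T \<Longrightarrow> dist y y0 < r \<Longrightarrow> y \<in> closure (T ` cball 0 (real n))"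
    using baire_step[OF T cl] by blast
  have stepB: "\<exists>x. norm x \<le> 2 * real n \<and> norm (y - T x) < e"
    if y: "y \<in> range T" "norm y < r" and e: "0 < e" for y e
  proof -
    have "y0 + y \<in> closure (T ` cball 0 (real n))"
      using B[of "y0 + y"] range_add[OF T y0 y(1)] y(2) by (simp add: dist_norm)
    then obtain u1 where u1: "u1 \<in> T ` cball 0 (real n)" "dist u1 (y0 + y) < e/2"
      using e unfolding closure_approachable by (meson half_gt_zero)
    have "y0 \<in> closure (T ` cball 0 (real n))" using B[OF y0] r by simp
    then obtain u2 where u2: "u2 \<in> T ` cball 0 (real n)" "dist u2 y0 < e/2"
      using e unfolding closure_approachable by (meson half_gt_zero)
    obtain x1 where x1: "norm x1 \<le> real n" "u1 = T x1" using u1(1) by auto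
    obtain x2 where x2: "norm x2 \<le> real n" "u2 = T x2" using u2(1) by auto
    have "norm (x1 - x2) \<le> norm x1 + norm x2" by (rule norm_triangle_ineq4)
    then have nx: "norm (x1 - x2) \<le> 2 * real n" using x1 x2 by simp
    have "y - T (x1 - x2) = ((y0 + y) - T x1) - (y0 - T x2)" by (simp add: bclin_diff[OF T] algebra_simps)
    then have "norm (y - T (x1 - x2)) \<le> norm ((y0 + y) - T x1) + norm (y0 - T x2)"
      by (metis norm_triangle_ineq4)
    also have "\<dots> < e" using u1(2) u2(2) x1(2) x2(2) by (simp add: dist_norm norm_minus_commute)
    finally show ?thesis using nx by blast
  qed
  define C0 where "C0 = 4 * real n / r"
  have C0: "0 \<le> C0" using r by (simp add: C0_def)
  have approx: "\<exists>x. norm x \<le> C0 * norm y \<and> norm (y - T x) < e"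
    if y: "y \<in> range T" and e: "0 < e" for y e
  proof (cases "y = 0")
    case True
    then show ?thesis using e bclin_zero[OF T] by (intro exI[of _ 0]) simp
  next
    case False
    define s where "s = r / (2 * norm y)"
    have s: "0 < s" using r False by (simp add: s_def)
    have y': "scaleR s y \<in> range T" using range_scaleR[OF T y] .
    have ny': "norm (scaleR s y) = r / 2" using False r by (simp add: s_def)
    obtain x' where x': "norm x' \<le> 2 * real n" "norm (scaleR s y - T x') < e * s"
    proof -
      have "norm (scaleR s y) < r" using ny' r by simp
      moreover have "0 < e * s" using e s by simp
      ultimately show ?thesis using stepB[OF y'] that by blast
    qed
    define x where "x = scaleR (1/s) x'"
    have "norm x = norm x' / s" using s by (simp add: x_def)
    also have "\<dots> \<le> 2 * real n / s" using x'(1) s by (simp add: divide_right_mono)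
    also have "\<dots> = C0 * norm y" using r False by (simp add: s_def C0_def field_simps)
    finally have nx: "norm x \<le> C0 * norm y" .
    have "y - T x = scaleR (1/s) (scaleR s y - T x')"
      using s by (simp add: x_def bclin_scaleR[OF T] algebra_simps)
    then have "norm (y - T x) = norm (scaleR s y - T x') / s" using s by simp
    also have "\<dots> < e" using x'(2) s by (simp add: divide_less_eq)
    finally show ?thesis using nx by blast
  qed
  have "\<forall>y\<in>range T. \<exists>x. T x = y \<and> norm x \<le> 2 * C0 * norm y"
    using approx_to_exact[OF T C0 approx] by blast
  then show ?thesis by blast
qed


lemma pythag_le: "cinner a b = 0 \<Longrightarrow> norm a \<le> norm (a + (b::'a::complex_inner))"
proof -
  assume "cinner a b = 0"
  then have "(norm (a + b))\<^sup>2 = (norm a)\<^sup>2 + (norm b)\<^sup>2" using norm_sq_add[of a b] by simp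
  then have "(norm a)\<^sup>2 \<le> (norm (a + b))\<^sup>2" by simp
  then show ?thesis by (rule power2_le_imp_le) simp
qed

lemma kernel_csubspace: "bounded_clinear T \<Longrightarrow> csubspace {x. T x = 0}"
  unfolding csubspace_def by (simp add: bclin_zero bclin_add bclin_scaleC)

lemma kernel_closed:
  fixes T :: "'a::complex_inner \<Rightarrow> 'b::complex_inner"
  shows "bounded_clinear T \<Longrightarrow> closed {x. T x = 0}"
  by (rule closed_Collect_eq) (auto intro: linear_continuous_on bclin_bounded_linear)

lemma range_csubspace: "bounded_clinear T \<Longrightarrow> csubspace (range T)"
  unfolding csubspace_def
proof (intro conjI ballI allI)
  assume T: "bounded_clinear T"
  show "0 \<in> range T" using bclin_zero[OF T] by (metis rangeI)
  show "x + y \<in> range T" if "x \<in> range T" "y \<in> range T" for x y using range_add[OF T that] .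
  show "scaleC c x \<in> range T" if "x \<in> range T" for c x
    using that by (metis bclin_scaleC[OF T] rangeE rangeI)
qed

locale mpsetup =
  fixes T :: "'a::{complex_inner,complete_space} \<Rightarrow> 'a"
  assumes T: "bounded_clinear T" and cl: "closed (range T)"
begin

definition "N = {x. T x = 0}"
definition "R = range T"
definition "S y = (let x = inv T (proj R y) in x - proj N x)"

lemma N: "csubspace N" "closed N" unfolding N_def using kernel_csubspace[OF T] kernel_closed[OF T] by auto
lemma R: "csubspace R" "closed R" unfolding R_def using range_csubspace[OF T] cl by auto

lemma perpN: "cinner n (x - proj N x) = 0" if "n \<in> N"
  using proj(2)[OF N that] .
lemma projN_in: "T (proj N x) = 0" using proj(1)[OF N, of x] unfolding N_def by simp
lemma T_perp: "T (x - proj N x) = T x" using projN_in by (simp add: bclin_diff[OF T])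
lemma projR_in: "proj R y \<in> range T" using proj(1)[OF R, of y] unfolding R_def .

lemma S_char: "S y = p \<longleftrightarrow> (\<forall>n\<in>N. cinner n p = 0) \<and> T p = proj R y"
proof -
  define x where "x = inv T (proj R y)"
  have Tx: "T x = proj R y" unfolding x_def using projR_in by (simp add: f_inv_into_f)
  have Sy: "S y = x - proj N x" unfolding S_def x_def by (simp add: Let_def)
  have a: "\<forall>n\<in>N. cinner n (S y) = 0" using perpN Sy by simp
  have b: "T (S y) = proj R y" using T_perp Sy Tx by simp
  show ?thesis
  proof
    assume "S y = p" then show "(\<forall>n\<in>N. cinner n p = 0) \<and> T p = proj R y" using a b by simp
  next
    assume h: "(\<forall>n\<in>N. cinner n p = 0) \<and> T p = proj R y"
    have d: "S y - p \<in> N" using h b unfolding N_def by (simp add: bclin_diff[OF T])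
    have "cinner (S y - p) (S y - p) = cinner (S y - p) (S y) - cinner (S y - p) p"
      by (simp add: cinner_diff_right)
    also have "\<dots> = 0" using a h d by simp
    finally show "S y = p" by (simp add: cinner_eq_zero_iff)
  qed
qed

lemma S_perp: "n \<in> N \<Longrightarrow> cinner n (S y) = 0" using S_char by blast
lemma TS: "T (S y) = proj R y" using S_char by blast

lemma projR_eq: "v \<in> R \<Longrightarrow> cinner v (proj R a) = cinner v a"
  using proj(2)[OF R, of v a] by (simp add: cinner_diff_right)
lemma projN_eq: "v \<in> N \<Longrightarrow> cinner v (proj N a) = cinner v a"
  using proj(2)[OF N, of v a] by (simp add: cinner_diff_right)
lemma projR_R: "proj R a \<in> R" by (rule proj(1)[OF R])
lemma projN_N: "proj N a \<in> N" by (rule proj(1)[OF N])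

lemma R_add: "a \<in> R \<Longrightarrow> b \<in> R \<Longrightarrow> a + b \<in> R" using R(1) unfolding csubspace_def by blast
lemma R_scaleC: "a \<in> R \<Longrightarrow> scaleC c a \<in> R" using R(1) unfolding csubspace_def by blast

lemma projR_add: "proj R (a + b) = proj R a + proj R b"
proof (rule proj_unique[OF R])
  show "proj R a + proj R b \<in> R" by (intro R_add projR_R)
  show "\<forall>v\<in>R. cinner v (a + b - (proj R a + proj R b)) = 0"
    by (simp add: cinner_diff_right cinner_add_right projR_eq)
qed

lemma projR_scaleC: "proj R (scaleC c a) = scaleC c (proj R a)"
proof (rule proj_unique[OF R])
  show "scaleC c (proj R a) \<in> R" by (intro R_scaleC projR_R)
  show "\<forall>v\<in>R. cinner v (scaleC c a - scaleC c (proj R a)) = 0"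
    by (simp add: cinner_diff_right cinner_scaleC_right projR_eq)
qed

lemma projR_fix: "a \<in> R \<Longrightarrow> proj R a = a"
  by (rule proj_unique[OF R]) auto

lemma S_add: "S (a + b) = S a + S b"
  unfolding S_char using S_perp TS
  by (simp add: cinner_add_right bclin_add[OF T] projR_add)

lemma S_scaleC: "S (scaleC c a) = scaleC c (S a)"
  unfolding S_char using S_perp TS
  by (simp add: cinner_scaleC_right bclin_scaleC[OF T] projR_scaleC)

lemma projR_norm: "norm (proj R y) \<le> norm y"
proof -
  have "cinner (proj R y) (y - proj R y) = 0" using proj(2)[OF R] projR_R by blast
  then have "norm (proj R y) \<le> norm (proj R y + (y - proj R y))" by (rule pythag_le)
  then show ?thesis by simp
qed

lemma perp_norm: "norm (x - proj N x) \<le> norm x"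
proof -
  have "cinner (proj N x) (x - proj N x) = 0" using proj(2)[OF N] projN_N by blast
  then have "cinner (x - proj N x) (proj N x) = 0" using cinner_commute[of "x - proj N x" "proj N x"] by simp
  then have "norm (x - proj N x) \<le> norm ((x - proj N x) + proj N x)" by (rule pythag_le)
  then show ?thesis by simp
qed

lemma S_bounded: "bounded_clinear S"
proof -
  obtain C where C: "\<forall>y\<in>range T. \<exists>x. T x = y \<and> norm x \<le> C * norm y"
    using open_mapping_bound[OF T cl] by blast
  have "norm (S y) \<le> norm y * max C 0" for y
  proof -
    obtain x where x: "T x = proj R y" "norm x \<le> C * norm (proj R y)" using C projR_in by blast
    have "S y = x - proj N x" unfolding S_char using perpN x(1) T_perp by simp
    then have "norm (S y) \<le> norm x" using perp_norm by simp
    also have "\<dots> \<le> max C 0 * norm (proj R y)" using x(2)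
      by (meson max.cobounded1 mult_right_mono norm_ge_zero order_trans)
    also have "\<dots> \<le> max C 0 * norm y" using projR_norm by (simp add: mult_left_mono)
    finally show ?thesis by (simp add: mult.commute)
  qed
  then show ?thesis unfolding bounded_clinear_def using S_add S_scaleC by blast
qed

lemma TST: "T (S (T x)) = T x"
  using TS[of "T x"] projR_fix[of "T x"] unfolding R_def by simp

lemma STS: "S (T (S y)) = S y"
  unfolding S_char using S_perp TS projR_fix[OF projR_R] by simp

lemma ST_eq: "S (T x) = x - proj N x"
  unfolding S_char using perpN T_perp projR_fix[of "T x"] unfolding R_def by simp

lemma ST_adj: "is_adjoint (S \<circ> T) (S \<circ> T)"
  unfolding is_adjoint_def
proof (intro allI)
  fix x y
  have "cinner (x - proj N x) (proj N y) = 0"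
    using perpN[OF projN_N[of y], of x] cinner_commute[of "x - proj N x" "proj N y"] by simp
  then have 1: "cinner (x - proj N x) y = cinner (x - proj N x) (y - proj N y)"
    by (simp add: cinner_diff_right)
  have "cinner (proj N x) (y - proj N y) = 0" using perpN[OF projN_N[of x], of y] .
  then have 2: "cinner x (y - proj N y) = cinner (x - proj N x) (y - proj N y)"
    by (simp add: cinner_diff_left)
  show "cinner ((S \<circ> T) x) y = cinner x ((S \<circ> T) y)" using 1 2 by (simp add: ST_eq)
qed

lemma TS_adj: "is_adjoint (T \<circ> S) (T \<circ> S)"
  unfolding is_adjoint_def
proof (intro allI)
  fix x y
  have "cinner (proj R x) (y - proj R y) = 0" using proj(2)[OF R] projR_R by blast
  then have 1: "cinner (proj R x) y = cinner (proj R x) (proj R y)"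
    by (simp add: cinner_diff_right)
  have "cinner (proj R y) (x - proj R x) = 0" using proj(2)[OF R] projR_R by blast
  then have "cinner (x - proj R x) (proj R y) = 0" using cinner_commute[of "x - proj R x" "proj R y"] by simp
  then have 2: "cinner x (proj R y) = cinner (proj R x) (proj R y)"
    by (simp add: cinner_diff_left)
  show "cinner ((T \<circ> S) x) y = cinner x ((T \<circ> S) y)" using 1 2 by (simp add: TS)
qed

lemma S_mp: "is_moore_penrose T S"
  unfolding is_moore_penrose_def
  using S_bounded TST STS adj_eq[OF ST_adj] adj_eq[OF TS_adj] by (auto simp: fun_eq_iff)

lemma mp_unique: "is_moore_penrose T S' \<Longrightarrow> S' = S"
proof -
  assume h: "is_moore_penrose T S'"
  have S'b: "bounded_clinear S'" using h unfolding is_moore_penrose_def by blast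
  have TS'T: "T (S' (T x)) = T x" for x using h unfolding is_moore_penrose_def by (metis comp_apply)
  have S'TS': "S' (T (S' x)) = S' x" for x using h unfolding is_moore_penrose_def by (metis comp_apply)
  have a1: "adj (S' \<circ> T) = S' \<circ> T" "adj (T \<circ> S') = T \<circ> S'" using h unfolding is_moore_penrose_def by auto
  have P'adj: "is_adjoint (S' \<circ> T) (S' \<circ> T)"
    using adj_is_adjoint[OF bclin_comp[OF S'b T]] a1(1) by simp
  have Q'adj: "is_adjoint (T \<circ> S') (T \<circ> S')"
    using adj_is_adjoint[OF bclin_comp[OF T S'b]] a1(2) by simp
  have Padj: "cinner (S (T x)) y = cinner x (S (T y))" for x y using ST_adj unfolding is_adjoint_def by simp
  have Qadj: "cinner (T (S x)) y = cinner x (T (S y))" for x y using TS_adj unfolding is_adjoint_def by simp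
  have P'a: "cinner (S' (T x)) y = cinner x (S' (T y))" for x y using P'adj unfolding is_adjoint_def by simp
  have Q'a: "cinner (T (S' x)) y = cinner x (T (S' y))" for x y using Q'adj unfolding is_adjoint_def by simp
  have PP: "S' (T x) = S (T x)" for x
  proof (rule cinner_ext_left)
    fix y
    have "cinner (S' (T x)) y = cinner x (S' (T y))" by (rule P'a)
    also have "\<dots> = cinner x (S' (T (S (T y))))" by (simp add: TST)
    also have "\<dots> = cinner (S' (T x)) (S (T y))" by (simp add: P'a)
    also have "\<dots> = cinner (S (T (S' (T x)))) y" by (simp add: Padj)
    also have "\<dots> = cinner (S (T x)) y" by (simp add: TS'T)
    finally show "cinner (S' (T x)) y = cinner (S (T x)) y" .
  qed
  have QQ: "T (S' x) = T (S x)" for x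
  proof (rule cinner_ext_left)
    fix y
    have "cinner (T (S' x)) y = cinner x (T (S' y))" by (rule Q'a)
    also have "\<dots> = cinner x (T (S (T (S' y))))" by (simp add: TST)
    also have "\<dots> = cinner (T (S x)) (T (S' y))" by (simp add: Qadj)
    also have "\<dots> = cinner (T (S' (T (S x)))) y" by (simp add: Q'a)
    also have "\<dots> = cinner (T (S x)) y" by (simp add: TS'T)
    finally show "cinner (T (S' x)) y = cinner (T (S x)) y" .
  qed
  have "S' x = S x" for x
  proof -
    have "S' x = S' (T (S' x))" by (simp add: S'TS')
    also have "\<dots> = S (T (S' x))" by (rule PP)
    also have "\<dots> = S (T (S x))" by (simp add: QQ)
    also have "\<dots> = S x" by (rule STS)
    finally show ?thesis .
  qed
  then show "S' = S" by blast
qed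

lemma mp_inv_eq: "mp_inv T = S"
  unfolding mp_inv_def using S_mp mp_unique by blast

end


theorem mainTheorem3:
  fixes T :: "'a::{complex_inner, complete_space} \<Rightarrow> 'a"
  assumes "bounded_clinear T"
    and "closed (range T)"
    and "mp_inv T \<circ> T \<circ> (\<lambda>x. T x + adj T x) = (\<lambda>x. T x + adj T x) \<circ> (mp_inv T \<circ> T)"
  shows "hypo_EP T"
proof -
  note T = assms(1)
  interpret mpsetup T using assms(1,2) by unfold_locales
  define A where "A = adj T"
  have Aadj: "cinner (T x) y = cinner x (A y)" for x y
    using adj_is_adjoint[OF T] unfolding A_def is_adjoint_def by blast
  have Ad: "A (x - y) = A x - A y" for x y
    using adjoint_diff[OF adj_is_adjoint[OF T]] unfolding A_def .
  have Sb: "bounded_clinear S" by (rule S_bounded)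
  have hyp: "S (T (T x + A x)) = T (S (T x)) + A (S (T x))" for x
    using fun_cong[OF assms(3), of x] unfolding mp_inv_eq A_def by simp
  define P where "P x = S (T x)" for x
  define Q where "Q x = T (S x)" for x
  have TP: "T (P x) = T x" for x unfolding P_def by (rule TST)
  have Padj: "cinner (P x) y = cinner x (P y)" for x y
    using ST_adj unfolding is_adjoint_def P_def by simp
  have Qadj: "cinner (Q x) y = cinner x (Q y)" for x y
    using TS_adj unfolding is_adjoint_def Q_def by simp
  have Padd: "P (x + y) = P x + P y" for x y unfolding P_def by (simp add: bclin_add[OF T] bclin_add[OF Sb])
  have Pdiff: "P (x - y) = P x - P y" for x y unfolding P_def by (simp add: bclin_diff[OF T] bclin_diff[OF Sb])
  have Qdiff: "Q (x - y) = Q x - Q y" for x y unfolding Q_def by (simp add: bclin_diff[OF T] bclin_diff[OF Sb])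
  have Pkill: "P n = 0" if "T n = 0" for n unfolding P_def using that bclin_zero[OF Sb] by simp
  have Pfix: "P z = z" if z: "\<And>n. T n = 0 \<Longrightarrow> cinner n z = 0" for z
  proof -
    define w where "w = z - P z"
    have Tw: "T w = 0" unfolding w_def by (simp add: bclin_diff[OF T] TP)
    have "cinner w w = cinner z w - cinner (P z) w" unfolding w_def by (simp add: cinner_diff_left)
    also have "cinner z w = 0" using z[OF Tw] cinner_commute[of z w] by simp
    also have "cinner (P z) w = 0" using Padj[of z w] Pkill[OF Tw] by simp
    finally have "cinner w w = 0" by simp
    then show ?thesis unfolding w_def by (simp add: cinner_eq_zero_iff)
  qed
  have PA: "P (A x) = A x" for x
    by (rule Pfix) (simp add: Aadj[symmetric])
  have PT: "P (T x) = T x" for x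
  proof -
    have "P (T x) + A x = T x + A (P x)"
      using hyp[of x] unfolding P_def[symmetric] using Padd PA TP by (metis P_def)
    then have w: "T x - P (T x) = A (x - P x)" by (simp add: Ad algebra_simps)
    define w where "w = T x - P (T x)"
    have Tw: "T w = 0" unfolding w_def by (simp add: bclin_diff[OF T] TP)
    have "cinner w w = cinner w (A (x - P x))" using w unfolding w_def by simp
    also have "\<dots> = cinner (T w) (x - P x)" by (simp add: Aadj)
    also have "\<dots> = 0" using Tw by simp
    finally show ?thesis unfolding w_def by (simp add: cinner_eq_zero_iff)
  qed
  have PQ: "P (Q x) = Q x" for x unfolding Q_def by (rule PT)
  have PP: "P (P x) = P x" for x unfolding P_def using STS[of "T x"] TST by simp
  have QQ: "Q (Q x) = Q x" for x unfolding Q_def using TST by simp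
  have QP: "Q (P x) = Q x" for x
  proof (rule cinner_ext_left)
    fix y
    have "cinner (Q (P x)) y = cinner x (P (Q y))" by (simp add: Qadj Padj)
    also have "\<dots> = cinner (Q x) y" by (simp add: PQ Qadj)
    finally show "cinner (Q (P x)) y = cinner (Q x) y" .
  qed
  define E where "E x = P x - Q x" for x
  have EE: "E (E x) = E x" for x unfolding E_def by (simp add: Pdiff Qdiff PP PQ QP QQ)
  have Eadj: "cinner (E x) y = cinner x (E y)" for x y
    unfolding E_def by (simp add: cinner_diff_left cinner_diff_right Padj Qadj)
  have Epos: "cinner (E x) x = of_real ((norm (E x))\<^sup>2)" for x
  proof -
    have "cinner (E x) x = cinner (E (E x)) x" by (simp add: EE)
    also have "\<dots> = cinner (E x) (E x)" by (rule Eadj)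
    finally show ?thesis by (simp add: cinner_self)
  qed
  have "positive_op (\<lambda>x. mp_inv T (T x) - T (mp_inv T x))"
    unfolding positive_op_def mp_inv_eq
    using Epos unfolding E_def P_def Q_def by simp
  then show ?thesis unfolding hypo_EP_def using assms(2) by simp
qed

end
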